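(* Let $m,n,p\ge3$, let $A=W_m(a,c,b,d)$, $B=W_n(a,b,c,d)$ (states $q_0,\dots,q_{n-1}$), $C=W_p(d,b,c,a)$ (states $r_0,\dots,r_{p-1}$), and let $D$ be the automaton built from them. Let $(i_1,S_1)\neq(i_2,S_2)$ be two states of $D$ such that $S_1,S_2$ are saturated tableaux and, for $k=1,2$, $(q_0,r_0)\in S_k$ whenever $i_k=m-1$. Then $(i_1,S_1)$ and $(i_2,S_2)$ are not equivalent, i.e. there is a word $w\in\Sigma^*$ such that exactly one of $(i_1,S_1)\cdot w$, $(i_2,S_2)\cdot w$ lies in $F_D$.
   Context: Alphabet $\Sigma=\{a,b,c,d\}$. For distinct symbols $x_1,x_2,x_3,x_4$, $W_k(x_1,x_2,x_3,x_4)$ is the complete DFA with states $\{0,\dots,k-1\}$, initial state $0$, unique final state $k-1$, where $x_1$ acts as the cycle $j\mapsto j+1\bmod k$, $x_2$ swaps $k-2$ and $k-1$, $x_3$ sends $1$ to $0$ and fixes the others, and $x_4$ is the identity. Automaton $D$: states $Q_A\times 2^{Q_B\times Q_C}$, initial state $(0,\emptyset)$; $(i,S)\in F_D$ iff $S$ contains $(q,r)$ with exactly one of $q$ final in $B$, $r$ final in $C$; $(i,S)\cdot x=(i\cdot x,S\cdot x)$ if $i\cdot x$ is not final in $A$, and $(i\cdot x,S\cdot x\cup\{(q_0,r_0)\})$ otherwise, where $S\cdot x=\{(q\cdot x,r\cdot x):(q,r)\in S\}$. A tableau $S\subseteq Q_B\times Q_C$ is saturated if whenever $(q_x,r_{x'}),(q_x,r_{y'}),(q_y,r_{y'})\in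 S$ then $(q_y,r_{x'})\in S$. *)

theory Defs
  imports Main
begin

datatype sym = a | b | c | d

text \<open>Transition function of W_k(x1,x2,x3,x4) on states 0..k-1 (initial 0, final k-1).\<close>
definition W_step :: "nat \<Rightarrow> sym \<Rightarrow> sym \<Rightarrow> sym \<Rightarrow> sym \<Rightarrow> nat \<Rightarrow> sym \<Rightarrow> nat" where
  "W_step k x1 x2 x3 x4 j s =
     (if s = x1 then (j + 1) mod k
      else if s = x2 then (if j = k - 2 then k - 1 else if j = k - 1 then k - 2 else j)
      else if s = x3 then (if j = 1 then 0 else j)
      else j)"

definition stepA :: "nat \<Rightarrow> nat \<Rightarrow> sym \<Rightarrow> nat" where
  "stepA m = W_step m a c b d"

definition stepB :: "nat \<Rightarrow> nat \<Rightarrow> sym \<Rightarrow> nat" where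
  "stepB n = W_step n a b c d"

definition stepC :: "nat \<Rightarrow> nat \<Rightarrow> sym \<Rightarrow> nat" where
  "stepC p = W_step p d b c a"

definition stepD :: "nat \<Rightarrow> nat \<Rightarrow> nat \<Rightarrow> nat \<times> (nat \<times> nat) set \<Rightarrow> sym \<Rightarrow> nat \<times> (nat \<times> nat) set" where
  "stepD m n p st x =
     (let i' = stepA m (fst st) x;
          S' = (\<lambda>(q, r). (stepB n q x, stepC p r x)) ` snd st
      in if i' = m - 1 then (i', insert (0, 0) S') else (i', S'))"

definition runD :: "nat \<Rightarrow> nat \<Rightarrow> nat \<Rightarrow> nat \<times> (nat \<times> nat) set \<Rightarrow> sym list \<Rightarrow> nat \<times> (nat \<times> nat) set" where
  "runD m n p st w = fold (\<lambda>x st. stepD m n p st x) w st"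

definition finalD :: "nat \<Rightarrow> nat \<Rightarrow> nat \<times> (nat \<times> nat) set \<Rightarrow> bool" where
  "finalD n p st \<longleftrightarrow> (\<exists>(q, r) \<in> snd st. (q = n - 1) \<noteq> (r = p - 1))"

definition stateD :: "nat \<Rightarrow> nat \<Rightarrow> nat \<Rightarrow> nat \<times> (nat \<times> nat) set \<Rightarrow> bool" where
  "stateD m n p st \<longleftrightarrow> fst st < m \<and> snd st \<subseteq> {0..<n} \<times> {0..<p}"

definition saturated :: "(nat \<times> nat) set \<Rightarrow> bool" where
  "saturated S \<longleftrightarrow> (\<forall>qx qy rx ry. (qx, rx) \<in> S \<and> (qx, ry) \<in> S \<and> (qy, ry) \<in> S \<longrightarrow> (qy, rx) \<in> S)"

end

theory Submission
  imports Defs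
begin

datatype hl = HA | HB | HC | HD

fun hexp :: "hl \<Rightarrow> sym list" where
  "hexp HA = [a, b, b]" | "hexp HB = [b]" | "hexp HC = [c]" | "hexp HD = [d]"

definition expand :: "hl list \<Rightarrow> sym list" where
  "expand ws = concat (map hexp ws)"

definition fAw :: "nat \<Rightarrow> sym list \<Rightarrow> nat \<Rightarrow> nat" where
  "fAw m w i = fold (\<lambda>x i. stepA m i x) w i"
definition fBw :: "nat \<Rightarrow> sym list \<Rightarrow> nat \<Rightarrow> nat" where
  "fBw n w q = fold (\<lambda>x q. stepB n q x) w q"
definition fCw :: "nat \<Rightarrow> sym list \<Rightarrow> nat \<Rightarrow> nat" where
  "fCw p w r = fold (\<lambda>x r. stepC p r x) w r"

fun noins :: "nat \<Rightarrow> nat \<Rightarrow> sym list \<Rightarrow> bool" where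
  "noins m i [] = True"
| "noins m i (x # w) = (stepA m i x \<noteq> m - 1 \<and> noins m (stepA m i x) w)"

lemma expand_append[simp]: "expand (u @ v) = expand u @ expand v"
  by (simp add: expand_def)
lemma expand_Cons[simp]: "expand (x # v) = hexp x @ expand v"
  by (simp add: expand_def)
lemma expand_Nil[simp]: "expand [] = []"
  by (simp add: expand_def)

lemma fAw_simps[simp]: "fAw m [] i = i" "fAw m (x # w) i = fAw m w (stepA m i x)"
  "fAw m (u @ v) i = fAw m v (fAw m u i)"
  by (simp_all add: fAw_def)
lemma fBw_simps[simp]: "fBw n [] i = i" "fBw n (x # w) i = fBw n w (stepB n i x)"
  "fBw n (u @ v) i = fBw n v (fBw n u i)"
  by (simp_all add: fBw_def)
lemma fCw_simps[simp]: "fCw n [] i = i" "fCw n (x # w) i = fCw n w (stepC n i x)"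
  "fCw n (u @ v) i = fCw n v (fCw n u i)"
  by (simp_all add: fCw_def)

lemma noins_append[simp]: "noins m i (u @ v) = (noins m i u \<and> noins m (fAw m u i) v)"
  by (induction u arbitrary: i) auto

lemma runD_Nil[simp]: "runD m n p st [] = st"
  by (simp add: runD_def)
lemma runD_Cons: "runD m n p st (x # w) = runD m n p (stepD m n p st x) w"
  by (simp add: runD_def)
lemma runD_append: "runD m n p st (u @ v) = runD m n p (runD m n p st u) v"
  by (simp add: runD_def)

lemma fst_stepD[simp]: "fst (stepD m n p st x) = stepA m (fst st) x"
  by (simp add: stepD_def Let_def)

lemma fst_runD: "fst (runD m n p st w) = fAw m w (fst st)"
  by (induction w arbitrary: st) (simp_all add: runD_Cons)

lemma runD_noins:
  "noins m i w \<Longrightarrow> runD m n p (i, S) w = (fAw m w i, (\<lambda>(q, r). (fBw n w q, fCw p w r)) ` S)"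
proof (induction w arbitrary: i S)
  case Nil then show ?case by simp
next
  case (Cons x w)
  have s: "stepD m n p (i, S) x = (stepA m i x, (\<lambda>(q, r). (stepB n q x, stepC p r x)) ` S)"
    using Cons.prems by (simp add: stepD_def Let_def)
  show ?case using Cons by (simp add: runD_Cons s image_image case_prod_beta)
qed

definition sw :: "nat \<Rightarrow> nat \<Rightarrow> nat" where
  "sw k j = (if j = k - 2 then k - 1 else if j = k - 1 then k - 2 else j)"
definition mu :: "nat \<Rightarrow> nat" where
  "mu j = (if j = 1 then 0 else j)"

lemma stepA_simps[simp]: "stepA m i a = Suc i mod m" "stepA m i c = sw m i" "stepA m i b = mu i" "stepA m i d = i"
  by (simp_all add: stepA_def W_step_def sw_def mu_def)
lemma stepB_simps[simp]: "stepB m i a = Suc i mod m" "stepB m i b = sw m i" "stepB m i c = mu i" "stepB m i d = i"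
  by (simp_all add: stepB_def W_step_def sw_def mu_def)
lemma stepC_simps[simp]: "stepC m i d = Suc i mod m" "stepC m i b = sw m i" "stepC m i c = mu i" "stepC m i a = i"
  by (simp_all add: stepC_def W_step_def sw_def mu_def)

lemma sw_sw: "k \<ge> 2 \<Longrightarrow> sw k (sw k j) = j"
  by (auto simp: sw_def)
lemma sw_lt: "k \<ge> 2 \<Longrightarrow> j < k \<Longrightarrow> sw k j < k"
  by (auto simp: sw_def)
lemma mu_lt: "j < k \<Longrightarrow> mu j < k"
  by (auto simp: mu_def)

lemma mod2: "(s::nat) < 2 * n \<Longrightarrow> s mod n = (if s < n then s else s - n)"
  by (simp add: le_mod_geq)

lemma merge_arith:
  assumes "1 \<le> x" "x < n" "q < n"
  shows "(mu ((q + (n + 1 - x)) mod n) + (x - 1)) mod n = (if q = x then x - 1 else q)"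
proof -
  define s where "s = q + (n + 1 - x)"
  have s2: "s < 2 * n" using assms by (simp add: s_def)
  show ?thesis
  proof (cases "s < n")
    case True
    then have sm: "s mod n = s" by simp
    have s1: "s \<noteq> 1" using assms by (simp add: s_def)
    have qx: "q \<noteq> x" using True assms by (simp add: s_def)
    have e: "s + (x - 1) = q + n" using assms by (simp add: s_def)
    have "mu (s mod n) = s" using sm s1 by (simp add: mu_def)
    then have "(mu (s mod n) + (x - 1)) mod n = q" using e assms by simp
    then show ?thesis using qx by (simp add: s_def)
  next
    case False
    then have sm: "s mod n = s - n" using mod2[OF s2] by simp
    have e: "s - n = q + 1 - x" "q + 1 \<ge> x" using assms False by (auto simp: s_def)
    have "(mu (s mod n) + (x - 1)) mod n = (if q = x then x - 1 else q)"
    proof -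
      consider "q + 1 = x" | "q = x" | "q > x" using e by linarith
      then show ?thesis
      proof cases
        case 1 then show ?thesis using assms by (simp add: sm e mu_def)
      next
        case 2 then show ?thesis using assms by (simp add: sm e mu_def)
      next
        case 3
        then have "q + 1 - x \<noteq> 1" by simp
        then have "mu (s mod n) = q + 1 - x" by (simp add: sm e mu_def)
        moreover have "q + 1 - x + (x - 1) = q" using 3 assms by simp
        ultimately show ?thesis using 3 assms by simp
      qed
    qed
    then show ?thesis by (simp add: s_def)
  qed
qed

lemma swap_arith:
  assumes "x + 1 < n" "q < n"
  shows "(sw n ((q + (n - 2 - x)) mod n) + (x + 2)) mod n =
         (if q = x then x + 1 else if q = x + 1 then x else q)"
proof -
  define s where "s = q + (n - 2 - x)"
  have s2: "s < 2 * n" using assms by (simp add: s_def)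
  show ?thesis
  proof (cases "s < n")
    case True
    then have sm: "s mod n = s" by simp
    have lt: "q < x + 2" using True assms by (simp add: s_def)
    show ?thesis
    proof (cases "q = x")
      case True
      then have "s = n - 2" using assms by (simp add: s_def)
      then have "sw n (s mod n) = n - 1" using sm by (simp add: sw_def)
      moreover have "(n - 1 + (x + 2)) mod n = x + 1" using assms
        by (simp add: le_mod_geq)
      ultimately show ?thesis using True by (simp add: s_def)
    next
      case qx: False
      show ?thesis
      proof (cases "q = x + 1")
        case True
        then have "s = n - 1" using assms by (simp add: s_def)
        then have "sw n (s mod n) = n - 2" using sm assms by (simp add: sw_def)
        moreover have "(n - 2 + (x + 2)) mod n = x" using assms
          by (simp add: le_mod_geq)
        ultimately show ?thesis using True qx by (simp add: s_def)
      next
        case False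
        then have "q < x" using lt qx by simp
        then have "s < n - 2" using assms by (simp add: s_def)
        then have "sw n (s mod n) = s" using sm by (simp add: sw_def)
        moreover have "s + (x + 2) = q + n" using assms \<open>q < x\<close> by (simp add: s_def)
        then have "(s + (x + 2)) mod n = q" using assms by simp
        ultimately show ?thesis using False qx by (simp add: s_def)
      qed
    qed
  next
    case False
    then have sm: "s mod n = s - n" using mod2[OF s2] by simp
    have e: "s - n = q - 2 - x" "q \<ge> x + 2" using assms False by (auto simp: s_def)
    then have "s - n \<noteq> n - 2" "s - n \<noteq> n - 1" using assms by auto
    then have "sw n (s mod n) = s - n" by (simp add: sm sw_def)
    moreover have "s - n + (x + 2) = q" using e by simp
    ultimately have "(sw n (s mod n) + (x + 2)) mod n = q" using assms by simp
    then show ?thesis using e by (simp add: s_def)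
  qed
qed

lemma genQ:
  fixes N :: nat and Q :: "nat set \<Rightarrow> bool"
  assumes N2: "N \<ge> 2" and base: "Q {N - 1}"
    and mer: "\<And>P x. 1 \<le> x \<Longrightarrow> x < N \<Longrightarrow> Q P \<Longrightarrow> Q {q. q < N \<and> (if q = x then x - 1 else q) \<in> P}"
    and swp: "\<And>P x. x + 1 < N \<Longrightarrow> Q P \<Longrightarrow>
       Q {q. q < N \<and> (if q = x then x + 1 else if q = x + 1 then x else q) \<in> P}"
  shows "P \<subseteq> {..<N} \<Longrightarrow> Q P"
proof -
  have singk: "\<And>k. k < N \<Longrightarrow> Q {N - 1 - k}"
  proof -
    fix k show "k < N \<Longrightarrow> Q {N - 1 - k}"
    proof (induction k)
      case 0 then show ?case using base by simp
    next
      case (Suc k)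
      then have IH: "Q {N - 1 - k}" by simp
      define x where "x = N - 2 - k"
      have x1: "x + 1 = N - 1 - k" "x + 1 < N" using Suc.prems by (auto simp: x_def)
      have "{q. q < N \<and> (if q = x then x + 1 else if q = x + 1 then x else q) \<in> {N - 1 - k}} = {x}"
        using x1 by auto
      then have "Q {x}" using swp[OF x1(2), of "{N - 1 - k}"] IH x1 by simp
      then show ?case using Suc.prems by (simp add: x_def)
    qed
  qed
  have sing: "\<And>x. x < N \<Longrightarrow> Q {x}"
  proof -
    fix x assume "x < N"
    then have "N - 1 - (N - 1 - x) = x" "N - 1 - x < N" by auto
    then show "Q {x}" using singk[of "N - 1 - x"] by simp
  qed
  have emp: "Q {}"
  proof -
    have eq: "{q. q < N \<and> (if q = 1 then 1 - 1 else q) \<in> {1::nat}} = {}" by auto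
    have "Q {q. q < N \<and> (if q = 1 then 1 - 1 else q) \<in> {1::nat}}"
      by (rule mer) (use sing N2 in auto)
    then show ?thesis by (subst (asm) eq)
  qed
  have main: "\<And>k P. P \<subseteq> {..<N} \<Longrightarrow> card P = k \<Longrightarrow> Q P"
  proof -
    fix k show "\<And>P. P \<subseteq> {..<N} \<Longrightarrow> card P = k \<Longrightarrow> Q P"
    proof (induction k)
      case 0
      have "finite P" using 0 finite_subset by blast
      then have "P = {}" using 0 by simp
      then show ?case using emp by simp
    next
      case (Suc k)
      have inner: "\<And>s P. P \<subseteq> {..<N} \<Longrightarrow> card P = Suc k \<Longrightarrow> sum id P = s \<Longrightarrow> Q P"
      proof -
        fix s show "\<And>P. P \<subseteq> {..<N} \<Longrightarrow> card P = Suc k \<Longrightarrow> sum id P = s \<Longrightarrow> Q P"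
        proof (induction s rule: less_induct)
          case (less s P)
          have fin: "finite P" using less.prems finite_subset by blast
          show ?case
          proof (cases "\<exists>j. j \<in> P \<and> j + 1 \<in> P")
            case True
            then obtain j where j: "j \<in> P" "j + 1 \<in> P" by blast
            have c: "card (P - {j + 1}) = k" using less.prems j fin by simp
            have QP: "Q (P - {j + 1})" using Suc.IH[of "P - {j+1}"] c less.prems by auto
            have eq: "{q. q < N \<and> (if q = j + 1 then j + 1 - 1 else q) \<in> P - {j + 1}} = P"
              using j less.prems by auto
            have jN: "j + 1 < N" using j less.prems by auto
            have "Q {q. q < N \<and> (if q = j + 1 then j + 1 - 1 else q) \<in> P - {j + 1}}"
              apply (rule mer) apply simp apply (rule jN) apply (rule QP) done
            then show ?thesis by (subst (asm) eq)
          next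
            case noadj: False
            show ?thesis
            proof (cases "\<exists>y \<in> P. y \<ge> 1 \<and> y - 1 \<notin> P")
              case True
              then obtain y where y: "y \<in> P" "y \<ge> 1" "y - 1 \<notin> P" by blast
              define P' where "P' = insert (y - 1) (P - {y})"
              have ny: "y - 1 \<notin> P - {y}" using y by auto
              have cP': "card P' = Suc k" using ny fin y less.prems
                by (simp add: P'_def card_insert_if)
              have s1: "sum id P' = (y - 1) + sum id (P - {y})"
                using ny fin by (simp add: P'_def)
              have s2: "sum id P = y + sum id (P - {y})"
                using fin y by (simp add: sum.remove)
              have "sum id P' < s" using s1 s2 y less.prems by simp
              moreover have "P' \<subseteq> {..<N}" using less.prems y by (auto simp: P'_def)
              ultimately have "Q P'" using less.IH cP' by blast
              moreover have "{q. q < N \<and> (if q = y - 1 then y - 1 + 1 else if q = y - 1 + 1 then y - 1 else q) \<in> P'} = P"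
                using y less.prems by (auto simp: P'_def)
              moreover have "y - 1 + 1 < N" using y less.prems by auto
              ultimately show ?thesis using swp[of "y - 1" P'] by simp
            next
              case False
              have "P \<subseteq> {0}"
              proof
                fix y assume yP: "y \<in> P"
                show "y \<in> {0}"
                proof (rule ccontr)
                  assume "y \<notin> {0}"
                  then have y1: "y \<ge> 1" by simp
                  then have "y - 1 \<in> P" using False yP by blast
                  moreover have "y - 1 + 1 = y" using y1 by simp
                  ultimately show False using noadj yP by metis
                qed
              qed
              then have "card P \<le> card {0::nat}" by (intro card_mono) auto
              then have "card P \<le> 1" by simp
              then have "k = 0" using less.prems by simp
              then obtain x where "P = {x}" using less.prems card_1_singletonE by auto
              then show ?thesis using sing less.prems by auto
            qed
          qed
        qed
      qed
      show ?case using inner Suc.prems by blast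
    qed
  qed
  show "P \<subseteq> {..<N} \<Longrightarrow> Q P" using main by blast
qed

lemma fBw_lt: "n \<ge> 2 \<Longrightarrow> q < n \<Longrightarrow> fBw n w q < n"
proof (induction w arbitrary: q)
  case Nil then show ?case by simp
next
  case (Cons x w) then show ?case by (cases x) (auto intro!: Cons.IH sw_lt mu_lt)
qed

lemma fCw_lt: "p \<ge> 2 \<Longrightarrow> r < p \<Longrightarrow> fCw p w r < p"
proof (induction w arbitrary: r)
  case Nil then show ?case by simp
next
  case (Cons x w) then show ?case by (cases x) (auto intro!: Cons.IH sw_lt mu_lt)
qed

definition Rz :: "nat \<Rightarrow> nat \<Rightarrow> nat set \<Rightarrow> nat set \<Rightarrow> bool" where
  "Rz n p F G \<longleftrightarrow> (\<exists>ws. (\<forall>q<n. (fBw n (expand ws) q = n - 1) = (q \<in> F)) \<and>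
                        (\<forall>r<p. (fCw p (expand ws) r = p - 1) = (r \<in> G)))"

lemma Rz_pre:
  assumes "Rz n p F G" "n \<ge> 2" "p \<ge> 2"
  shows "Rz n p {q. q < n \<and> fBw n (expand u) q \<in> F} {r. r < p \<and> fCw p (expand u) r \<in> G}"
proof -
  obtain ws where ws: "\<forall>q<n. (fBw n (expand ws) q = n - 1) = (q \<in> F)"
    "\<forall>r<p. (fCw p (expand ws) r = p - 1) = (r \<in> G)" using assms(1) by (auto simp: Rz_def)
  show ?thesis unfolding Rz_def
    apply (rule exI[of _ "u @ ws"])
    using ws fBw_lt[OF assms(2)] fCw_lt[OF assms(3)] by auto
qed

lemma Rz_cong: "Rz n p F G \<Longrightarrow> F \<inter> {..<n} = F' \<inter> {..<n} \<Longrightarrow> G \<inter> {..<p} = G' \<inter> {..<p} \<Longrightarrow> Rz n p F' G'"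
  unfolding Rz_def by (metis IntD1 IntI lessThan_iff)

lemma rep_HA_B: "n \<ge> 2 \<Longrightarrow> q < n \<Longrightarrow> fBw n (expand (replicate k HA)) q = (q + k) mod n"
proof (induction k arbitrary: q)
  case 0 then show ?case by simp
next
  case (Suc k)
  have "fBw n (expand (replicate (Suc k) HA)) q = fBw n (expand (replicate k HA)) (Suc q mod n)"
    using Suc.prems by (simp add: sw_sw)
  also have "\<dots> = (Suc q mod n + k) mod n" using Suc by simp
  also have "\<dots> = (q + Suc k) mod n" by (simp add: mod_add_left_eq)
  finally show ?case .
qed

lemma rep_HD_B: "fBw n (expand (replicate k HD)) q = q"
  by (induction k) auto

lemma rep_HA_C: "p \<ge> 2 \<Longrightarrow> fCw p (expand (replicate k HA)) r = r"
  by (induction k) (auto simp: sw_sw)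

lemma rep_HD_C: "r < p \<Longrightarrow> fCw p (expand (replicate k HD)) r = (r + k) mod p"
proof (induction k arbitrary: r)
  case 0 then show ?case by simp
next
  case (Suc k)
  have "fCw p (expand (replicate (Suc k) HD)) r = fCw p (expand (replicate k HD)) (Suc r mod p)"
    by simp
  also have "\<dots> = (Suc r mod p + k) mod p" using Suc by simp
  also have "\<dots> = (r + Suc k) mod p" by (simp add: mod_add_left_eq)
  finally show ?case .
qed

definition Mg :: "nat \<Rightarrow> nat \<Rightarrow> nat \<Rightarrow> nat \<Rightarrow> hl list" where
  "Mg n p x y = replicate (n + 1 - x) HA @ replicate (p + 1 - y) HD @ [HC] @ replicate (x - 1) HA @ replicate (y - 1) HD"
definition Sw :: "nat \<Rightarrow> nat \<Rightarrow> nat \<Rightarrow> nat \<Rightarrow> hl list" where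
  "Sw n p x y = replicate (n - 2 - x) HA @ replicate (p - 2 - y) HD @ [HB] @ replicate (x + 2) HA @ replicate (y + 2) HD"

lemma Mg_B: assumes "n \<ge> 2" "1 \<le> x" "x < n" "q < n"
  shows "fBw n (expand (Mg n p x y)) q = (if q = x then x - 1 else q)"
proof -
  have "fBw n (expand (Mg n p x y)) q = (mu ((q + (n + 1 - x)) mod n) + (x - 1)) mod n"
    using assms by (simp add: Mg_def rep_HA_B rep_HD_B mu_lt)
  then show ?thesis using merge_arith assms by simp
qed

lemma Mg_C: assumes "p \<ge> 2" "1 \<le> y" "y < p" "r < p"
  shows "fCw p (expand (Mg n p x y)) r = (if r = y then y - 1 else r)"
proof -
  have "fCw p (expand (Mg n p x y)) r = (mu ((r + (p + 1 - y)) mod p) + (y - 1)) mod p"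
    using assms by (simp add: Mg_def rep_HA_C rep_HD_C mu_lt)
  then show ?thesis using merge_arith assms by simp
qed

lemma Sw_B: assumes "n \<ge> 2" "x + 1 < n" "q < n"
  shows "fBw n (expand (Sw n p x y)) q = (if q = x then x + 1 else if q = x + 1 then x else q)"
proof -
  have "fBw n (expand (Sw n p x y)) q = (sw n ((q + (n - 2 - x)) mod n) + (x + 2)) mod n"
    using assms by (simp del: replicate.simps add: Sw_def rep_HA_B rep_HD_B sw_lt)
  then show ?thesis using swap_arith assms by simp
qed

lemma Sw_C: assumes "p \<ge> 2" "y + 1 < p" "r < p"
  shows "fCw p (expand (Sw n p x y)) r = (if r = y then y + 1 else if r = y + 1 then y else r)"
proof -
  have "fCw p (expand (Sw n p x y)) r = (sw p ((r + (p - 2 - y)) mod p) + (y + 2)) mod p"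
    using assms by (simp del: replicate.simps add: Sw_def rep_HA_C rep_HD_C sw_lt)
  then show ?thesis using swap_arith assms by simp
qed

definition nal :: "nat \<Rightarrow> nat set \<Rightarrow> bool" where
  "nal N P \<longleftrightarrow> (\<exists>y. y + 1 < N \<and> (y \<in> P \<longleftrightarrow> y + 1 \<in> P))"

lemma RowsAll:
  assumes n3: "n \<ge> 3" and p3: "p \<ge> 3" and na: "nal p R" and Rr: "R \<subseteq> {..<p}"
    and base: "Rz n p {n - 1} R"
  shows "P \<subseteq> {..<n} \<Longrightarrow> Rz n p P R"
proof -
  obtain y where y: "y + 1 < p" "y \<in> R \<longleftrightarrow> y + 1 \<in> R" using na by (auto simp: nal_def)
  show "P \<subseteq> {..<n} \<Longrightarrow> Rz n p P R"
  proof (rule genQ[where N = n and Q = "\<lambda>P. Rz n p P R"])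
    show "n \<ge> 2" using n3 by simp
    show "Rz n p {n - 1} R" by (rule base)
  next
    fix P x assume x: "1 \<le> x" "x < n" and RP: "Rz n p P R"
    have "Rz n p {q. q < n \<and> fBw n (expand (Mg n p x (y + 1))) q \<in> P}
                 {r. r < p \<and> fCw p (expand (Mg n p x (y + 1))) r \<in> R}"
      using Rz_pre[OF RP] n3 p3 by simp
    then show "Rz n p {q. q < n \<and> (if q = x then x - 1 else q) \<in> P} R"
    proof (rule Rz_cong)
      show "{q. q < n \<and> fBw n (expand (Mg n p x (y + 1))) q \<in> P} \<inter> {..<n} =
            {q. q < n \<and> (if q = x then x - 1 else q) \<in> P} \<inter> {..<n}"
        using Mg_B[of n x] n3 x by auto
      show "{r. r < p \<and> fCw p (expand (Mg n p x (y + 1))) r \<in> R} \<inter> {..<p} = R \<inter> {..<p}"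
      proof -
        have hC: "\<And>r. r < p \<Longrightarrow> fCw p (expand (Mg n p x (y + 1))) r = (if r = y + 1 then y else r)"
          using Mg_C[of p "y + 1"] p3 y by simp
        show ?thesis using hC y Rr by (auto split: if_splits)
      qed
    qed
  next
    fix P x assume x: "x + 1 < n" and RP: "Rz n p P R"
    have "Rz n p {q. q < n \<and> fBw n (expand (Sw n p x y)) q \<in> P}
                 {r. r < p \<and> fCw p (expand (Sw n p x y)) r \<in> R}"
      using Rz_pre[OF RP] n3 p3 by simp
    then show "Rz n p {q. q < n \<and> (if q = x then x + 1 else if q = x + 1 then x else q) \<in> P} R"
    proof (rule Rz_cong)
      show "{q. q < n \<and> fBw n (expand (Sw n p x y)) q \<in> P} \<inter> {..<n} =
            {q. q < n \<and> (if q = x then x + 1 else if q = x + 1 then x else q) \<in> P} \<inter> {..<n}"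
        using Sw_B[of n x] n3 x by auto
      show "{r. r < p \<and> fCw p (expand (Sw n p x y)) r \<in> R} \<inter> {..<p} = R \<inter> {..<p}"
        using Sw_C[of p y] p3 y Rr by (auto split: if_splits)
    qed
  qed
qed

lemma ColsAll:
  assumes n3: "n \<ge> 3" and p3: "p \<ge> 3" and na: "nal n P" and Pr: "P \<subseteq> {..<n}"
    and base: "Rz n p P {p - 1}"
  shows "R \<subseteq> {..<p} \<Longrightarrow> Rz n p P R"
proof -
  obtain y where y: "y + 1 < n" "y \<in> P \<longleftrightarrow> y + 1 \<in> P" using na by (auto simp: nal_def)
  show "R \<subseteq> {..<p} \<Longrightarrow> Rz n p P R"
  proof (rule genQ[where N = p and Q = "\<lambda>R. Rz n p P R"])
    show "p \<ge> 2" using p3 by simp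
    show "Rz n p P {p - 1}" by (rule base)
  next
    fix R x assume x: "1 \<le> x" "x < p" and RP: "Rz n p P R"
    have "Rz n p {q. q < n \<and> fBw n (expand (Mg n p (y + 1) x)) q \<in> P}
                 {r. r < p \<and> fCw p (expand (Mg n p (y + 1) x)) r \<in> R}"
      using Rz_pre[OF RP] n3 p3 by simp
    then show "Rz n p P {q. q < p \<and> (if q = x then x - 1 else q) \<in> R}"
    proof (rule Rz_cong)
      show "{q. q < n \<and> fBw n (expand (Mg n p (y + 1) x)) q \<in> P} \<inter> {..<n} = P \<inter> {..<n}"
      proof -
        have hB: "\<And>q. q < n \<Longrightarrow> fBw n (expand (Mg n p (y + 1) x)) q = (if q = y + 1 then y else q)"
          using Mg_B[of n "y + 1"] n3 y by simp
        show ?thesis using hB y Pr by (auto split: if_splits)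
      qed
      show "{r. r < p \<and> fCw p (expand (Mg n p (y + 1) x)) r \<in> R} \<inter> {..<p} =
            {q. q < p \<and> (if q = x then x - 1 else q) \<in> R} \<inter> {..<p}"
        using Mg_C[of p x] p3 x by auto
    qed
  next
    fix R x assume x: "x + 1 < p" and RP: "Rz n p P R"
    have "Rz n p {q. q < n \<and> fBw n (expand (Sw n p y x)) q \<in> P}
                 {r. r < p \<and> fCw p (expand (Sw n p y x)) r \<in> R}"
      using Rz_pre[OF RP] n3 p3 by simp
    then show "Rz n p P {q. q < p \<and> (if q = x then x + 1 else if q = x + 1 then x else q) \<in> R}"
    proof (rule Rz_cong)
      show "{q. q < n \<and> fBw n (expand (Sw n p y x)) q \<in> P} \<inter> {..<n} = P \<inter> {..<n}"
        using Sw_B[of n y] n3 y Pr by (auto split: if_splits)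
      show "{r. r < p \<and> fCw p (expand (Sw n p y x)) r \<in> R} \<inter> {..<p} =
            {q. q < p \<and> (if q = x then x + 1 else if q = x + 1 then x else q) \<in> R} \<inter> {..<p}"
        using Sw_C[of p x] p3 x by auto
    qed
  qed
qed

lemma Rz_all:
  assumes n3: "n \<ge> 3" and p3: "p \<ge> 3" and F: "F \<subseteq> {..<n}" and G: "G \<subseteq> {..<p}"
  shows "Rz n p F G"
proof -
  have r0: "Rz n p {n - 1} {p - 1}" unfolding Rz_def by (rule exI[of _ "[]"]) simp
  have nalp: "nal p {p - 1}" using p3 unfolding nal_def by (intro exI[of _ 0]) auto
  have naln: "nal n {n - 1}" using n3 unfolding nal_def by (intro exI[of _ 0]) auto
  have rowsP: "\<And>P. P \<subseteq> {..<n} \<Longrightarrow> Rz n p P {p - 1}"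
    using RowsAll[OF n3 p3 nalp _ r0] p3 by auto
  have gen: "\<And>F G. F \<subseteq> {..<n} \<Longrightarrow> G \<subseteq> {..<p} \<Longrightarrow> nal n F \<or> nal p G \<Longrightarrow> Rz n p F G"
  proof -
    fix F G assume F: "F \<subseteq> {..<n}" and G: "G \<subseteq> {..<p}" and o: "nal n F \<or> nal p G"
    show "Rz n p F G"
    proof (cases "nal n F")
      case True
      then show ?thesis using ColsAll[OF n3 p3 True F rowsP[OF F] G] by simp
    next
      case False
      then have ng: "nal p G" using o by simp
      have "Rz n p {n - 1} G" using ColsAll[OF n3 p3 naln _ rowsP G] n3 by auto
      then show ?thesis using RowsAll[OF n3 p3 ng G _ F] by simp
    qed
  qed
  show ?thesis
  proof (cases "nal n F \<or> nal p G")
    case True then show ?thesis using gen F G by blast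
  next
    case False
    define sp :: "nat \<Rightarrow> nat" where "sp q = (if q = 0 then 1 else if q = 1 then 0 else q)" for q
    define F' where "F' = {q. q < n \<and> sp q \<in> F}"
    define G' where "G' = {r. r < p \<and> sp r \<in> G}"
    have nF: "\<forall>y. y + 1 < n \<longrightarrow> (y \<in> F \<longleftrightarrow> y + 1 \<notin> F)" using False by (auto simp: nal_def)
    have "0 \<in> F \<longleftrightarrow> 2 \<in> F" using nF[rule_format, of 0] nF[rule_format, of 1] n3 by (auto simp: numeral_2_eq_2)
    moreover have "1 \<in> F' \<longleftrightarrow> 0 \<in> F" "2 \<in> F' \<longleftrightarrow> 2 \<in> F" using n3 by (auto simp: F'_def sp_def)
    ultimately have "(1::nat) \<in> F' \<longleftrightarrow> 1 + 1 \<in> F'" by (metis one_add_one)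
    then have "nal n F'" unfolding nal_def using n3 by (intro exI[of _ 1]) simp
    moreover have "F' \<subseteq> {..<n}" "G' \<subseteq> {..<p}" by (auto simp: F'_def G'_def)
    ultimately have RF': "Rz n p F' G'" using gen by blast
    have "Rz n p {q. q < n \<and> fBw n (expand (Sw n p 0 0)) q \<in> F'}
                 {r. r < p \<and> fCw p (expand (Sw n p 0 0)) r \<in> G'}"
      using Rz_pre[OF RF'] n3 p3 by simp
    then show ?thesis
    proof (rule Rz_cong)
      show "{q. q < n \<and> fBw n (expand (Sw n p 0 0)) q \<in> F'} \<inter> {..<n} = F \<inter> {..<n}"
      proof -
        have h: "\<And>q. q < n \<Longrightarrow> fBw n (expand (Sw n p 0 0)) q = sp q"
          using Sw_B[of n 0] n3 by (simp add: sp_def)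
        show ?thesis using h F n3 by (auto simp: F'_def sp_def split: if_splits)
      qed
      show "{r. r < p \<and> fCw p (expand (Sw n p 0 0)) r \<in> G'} \<inter> {..<p} = G \<inter> {..<p}"
      proof -
        have h: "\<And>q. q < p \<Longrightarrow> fCw p (expand (Sw n p 0 0)) q = sp q"
          using Sw_C[of p 0] p3 by (simp add: sp_def)
        show ?thesis using h G p3 by (auto simp: G'_def sp_def split: if_splits)
      qed
    qed
  qed
qed

abbreviation "RG n p \<equiv> {..<n} \<times> {..<(p::nat)}"

lemma stepB_lt: "n \<ge> 2 \<Longrightarrow> q < n \<Longrightarrow> stepB n q x < n"
  by (cases x) (auto intro: sw_lt mu_lt)
lemma stepC_lt: "p \<ge> 2 \<Longrightarrow> r < p \<Longrightarrow> stepC p r x < p"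
  by (cases x) (auto intro: sw_lt mu_lt)

lemma stepD_snd: "snd (stepD m n p st x) =
   (\<lambda>(q, r). (stepB n q x, stepC p r x)) ` snd st \<union> (if stepA m (fst st) x = m - 1 then {(0,0)} else {})"
  by (auto simp: stepD_def Let_def)

lemma runD_range: "n \<ge> 2 \<Longrightarrow> p \<ge> 2 \<Longrightarrow> snd st \<subseteq> RG n p \<Longrightarrow> snd (runD m n p st w) \<subseteq> RG n p"
proof (induction w arbitrary: st)
  case Nil then show ?case by simp
next
  case (Cons x w)
  have "snd (stepD m n p st x) \<subseteq> RG n p"
    using Cons.prems stepB_lt[of n] stepC_lt[of p] by (auto simp: stepD_snd)
  then show ?case using Cons by (simp add: runD_Cons)
qed

lemma home: "m \<ge> 3 \<Longrightarrow> noins m 0 (expand ws) \<and> fAw m (expand ws) 0 = 0"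
proof (induction ws)
  case Nil then show ?case by simp
next
  case (Cons x ws)
  then show ?case by (cases x) (auto simp: mu_def sw_def)
qed

lemma home_run: "m \<ge> 3 \<Longrightarrow>
  runD m n p (0, T) (expand ws) = (0, (\<lambda>(q, r). (fBw n (expand ws) q, fCw p (expand ws) r)) ` T)"
  using runD_noins[of m 0 "expand ws" n p T] home[of m ws] by simp

lemma final_img: "finalD n p (i, (\<lambda>(q, r). (f q, g r)) ` T) \<longleftrightarrow> (\<exists>q r. (q, r) \<in> T \<and> (f q = n - 1) \<noteq> (g r = p - 1))"
  unfolding finalD_def by force

lemma testA:
  assumes m3: "m \<ge> 3" and n3: "n \<ge> 3" and p3: "p \<ge> 3"
    and T1: "T1 \<subseteq> RG n p" and T2: "T2 \<subseteq> RG n p"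
    and qr: "(q, r) \<in> T1" and dif: "(q \<in> F) \<noteq> (r \<in> G)"
    and sep: "\<And>x y. (x, y) \<in> T2 \<Longrightarrow> (x \<in> F \<longleftrightarrow> y \<in> G)"
  shows "\<exists>w. finalD n p (runD m n p (0, T1) w) \<noteq> finalD n p (runD m n p (0, T2) w)"
proof -
  have "Rz n p (F \<inter> {..<n}) (G \<inter> {..<p})" using Rz_all[OF n3 p3] by auto
  then obtain ws where ws: "\<forall>q<n. (fBw n (expand ws) q = n - 1) = (q \<in> F \<inter> {..<n})"
    "\<forall>r<p. (fCw p (expand ws) r = p - 1) = (r \<in> G \<inter> {..<p})" by (auto simp: Rz_def)
  have f1: "finalD n p (runD m n p (0, T1) (expand ws))"
    unfolding home_run[OF m3] final_img using qr T1 ws dif by blast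
  have f2: "\<not> finalD n p (runD m n p (0, T2) (expand ws))"
    unfolding home_run[OF m3] final_img using T2 ws sep by blast
  show ?thesis using f1 f2 by blast
qed

lemma prefix:
  assumes "runD m n p st1 u = (0, T1)" "runD m n p st2 u = (0, T2)"
    and "\<exists>w. finalD n p (runD m n p (0, T1) w) \<noteq> finalD n p (runD m n p (0, T2) w)"
  shows "\<exists>w. finalD n p (runD m n p st1 w) \<noteq> finalD n p (runD m n p st2 w)"
  using assms by (metis runD_append)

definition Fq :: "(nat \<times> nat) set \<Rightarrow> nat \<Rightarrow> nat set" where
  "Fq S q = insert q {q'. \<exists>r'. (q, r') \<in> S \<and> (q', r') \<in> S}"
definition Gq :: "(nat \<times> nat) set \<Rightarrow> nat \<Rightarrow> nat set" where
  "Gq S q = {r'. (q, r') \<in> S}"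

lemma sat_sep:
  assumes "saturated S" "(x, y) \<in> S"
  shows "x \<in> Fq S q \<longleftrightarrow> y \<in> Gq S q"
proof
  assume "x \<in> Fq S q"
  then show "y \<in> Gq S q"
  proof (cases "x = q")
    case True then show ?thesis using assms by (simp add: Gq_def)
  next
    case False
    then obtain r' where "(q, r') \<in> S" "(x, r') \<in> S" using \<open>x \<in> Fq S q\<close> by (auto simp: Fq_def)
    then have "(q, y) \<in> S" using assms unfolding saturated_def by blast
    then show ?thesis by (simp add: Gq_def)
  qed
next
  assume "y \<in> Gq S q"
  then show "x \<in> Fq S q" using assms by (auto simp: Fq_def Gq_def)
qed

lemma Fq_self: "q \<in> Fq S q" by (simp add: Fq_def)
lemma Gq_not: "(q, r) \<notin> S \<Longrightarrow> r \<notin> Gq S q" by (simp add: Gq_def)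
lemma Fq_range: "S \<subseteq> RG n p \<Longrightarrow> q < n \<Longrightarrow> Fq S q \<subseteq> {..<n}" by (auto simp: Fq_def)
lemma Gq_range: "S \<subseteq> RG n p \<Longrightarrow> Gq S q \<subseteq> {..<p}" by (auto simp: Gq_def)

lemma sep_img:
  assumes injf: "inj_on f {..<n}" and injg: "inj_on g {..<p}"
    and U: "U \<subseteq> RG n p" and F: "F \<subseteq> {..<n}" and G: "G \<subseteq> {..<p}"
    and sep: "\<And>x y. (x, y) \<in> U \<Longrightarrow> (x \<in> F \<longleftrightarrow> y \<in> G)"
    and xy: "(x, y) \<in> (\<lambda>(q, r). (f q, g r)) ` U"
  shows "x \<in> f ` F \<longleftrightarrow> y \<in> g ` G"
proof -
  obtain x0 y0 where e: "(x0, y0) \<in> U" "x = f x0" "y = g y0" using xy by auto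
  then have "x0 < n" "y0 < p" using U by auto
  then have "x \<in> f ` F \<longleftrightarrow> x0 \<in> F" "y \<in> g ` G \<longleftrightarrow> y0 \<in> G"
    using e inj_on_image_mem_iff[OF injf _ F] inj_on_image_mem_iff[OF injg _ G] by auto
  then show ?thesis using sep[OF e(1)] by simp
qed

lemma mem_img: "inj_on f {..<n} \<Longrightarrow> F \<subseteq> {..<n} \<Longrightarrow> q < n \<Longrightarrow> f q \<in> f ` F \<longleftrightarrow> q \<in> F"
  using inj_on_image_mem_iff[of f "{..<n}" q F] by simp

lemma caseC0:
  assumes m3: "m \<ge> 3" and n3: "n \<ge> 3" and p3: "p \<ge> 3"
    and ni: "noins m i u" and A0: "fAw m u i = 0"
    and injf: "inj_on (fBw n u) {..<n}" and injg: "inj_on (fCw p u) {..<p}"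
    and S1: "S1 \<subseteq> RG n p" and S2: "S2 \<subseteq> RG n p" and sat: "saturated S2"
    and in1: "(q, r) \<in> S1" and out2: "(q, r) \<notin> S2"
  shows "\<exists>w. finalD n p (runD m n p (i, S1) w) \<noteq> finalD n p (runD m n p (i, S2) w)"
proof -
  let ?h = "\<lambda>(q, r). (fBw n u q, fCw p u r)"
  have q: "q < n" "r < p" using in1 S1 by auto
  have r1: "runD m n p (i, S1) u = (0, ?h ` S1)" using runD_noins[OF ni] A0 by simp
  have r2: "runD m n p (i, S2) u = (0, ?h ` S2)" using runD_noins[OF ni] A0 by simp
  have rg: "\<And>S. S \<subseteq> RG n p \<Longrightarrow> ?h ` S \<subseteq> RG n p"
    using fBw_lt[of n] fCw_lt[of p] n3 p3 by auto
  have FR: "Fq S2 q \<subseteq> {..<n}" using Fq_range[OF S2 q(1)] .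
  have GR: "Gq S2 q \<subseteq> {..<p}" using Gq_range[OF S2] .
  show ?thesis
  proof (rule prefix[OF r1 r2], rule testA[OF m3 n3 p3 rg[OF S1] rg[OF S2]])
    show "(fBw n u q, fCw p u r) \<in> ?h ` S1" using in1 by force
    show "(fBw n u q \<in> fBw n u ` Fq S2 q) \<noteq> (fCw p u r \<in> fCw p u ` Gq S2 q)"
      using mem_img[OF injf FR q(1)] mem_img[OF injg GR q(2)] Fq_self Gq_not[OF out2] by simp
    have sepS2: "\<And>x y. (x, y) \<in> S2 \<Longrightarrow> (x \<in> Fq S2 q \<longleftrightarrow> y \<in> Gq S2 q)"
      using sat_sep[OF sat] by blast
    fix x y assume xy: "(x, y) \<in> ?h ` S2"
    show "x \<in> fBw n u ` Fq S2 q \<longleftrightarrow> y \<in> fCw p u ` Gq S2 q"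
      using sep_img[OF injf injg S2 FR GR sepS2 xy] .
  qed
qed

lemma Suc_mod_cases: "q < n \<Longrightarrow> Suc q mod n = (if Suc q = n then 0 else Suc q)"
  by auto

lemma inj_Suc_mod: "inj_on (\<lambda>q. Suc q mod n) {..<n}"
proof (rule inj_onI)
  fix x y assume "x \<in> {..<n}" "y \<in> {..<n}" "Suc x mod n = Suc y mod n"
  then show "x = y" using Suc_mod_cases[of x n] Suc_mod_cases[of y n]
    by (auto split: if_splits)
qed

lemma inj_sw: "k \<ge> 2 \<Longrightarrow> inj_on (sw k) A"
  by (rule inj_on_inverseI[where g = "sw k"]) (simp add: sw_sw)

lemma inj_stepB: "n \<ge> 2 \<Longrightarrow> x \<noteq> c \<Longrightarrow> inj_on (\<lambda>q. stepB n q x) {..<n}"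
proof (cases x)
  case a then show ?thesis using inj_Suc_mod[of n] by simp
next
  case b then show "n \<ge> 2 \<Longrightarrow> ?thesis" using inj_sw[of n] by simp
qed (auto simp: inj_on_def)
lemma inj_stepC: "p \<ge> 2 \<Longrightarrow> x \<noteq> c \<Longrightarrow> inj_on (\<lambda>q. stepC p q x) {..<p}"
proof (cases x)
  case d then show ?thesis using inj_Suc_mod[of p] by simp
next
  case b then show "p \<ge> 2 \<Longrightarrow> ?thesis" using inj_sw[of p] by simp
qed (auto simp: inj_on_def)

lemma inj_fBw: "n \<ge> 2 \<Longrightarrow> c \<notin> set w \<Longrightarrow> inj_on (fBw n w) {..<n}"
proof (induction w)
  case Nil then show ?case by (simp add: inj_on_def)
next
  case (Cons x w)
  show ?case
  proof (rule inj_onI)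
    fix q q' assume q: "q \<in> {..<n}" "q' \<in> {..<n}" and e: "fBw n (x # w) q = fBw n (x # w) q'"
    have "stepB n q x < n" "stepB n q' x < n" using q Cons.prems stepB_lt by auto
    then have "stepB n q x = stepB n q' x" using e Cons inj_onD[of "fBw n w" "{..<n}"] by auto
    then show "q = q'" using inj_stepB[of n x] Cons.prems q inj_onD by fastforce
  qed
qed

lemma inj_fCw: "p \<ge> 2 \<Longrightarrow> c \<notin> set w \<Longrightarrow> inj_on (fCw p w) {..<p}"
proof (induction w)
  case Nil then show ?case by (simp add: inj_on_def)
next
  case (Cons x w)
  show ?case
  proof (rule inj_onI)
    fix q q' assume q: "q \<in> {..<p}" "q' \<in> {..<p}" and e: "fCw p (x # w) q = fCw p (x # w) q'"
    have "stepC p q x < p" "stepC p q' x < p" using q Cons.prems stepC_lt by auto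
    then have "stepC p q x = stepC p q' x" using e Cons inj_onD[of "fCw p w" "{..<p}"] by auto
    then show "q = q'" using inj_stepC[of p x] Cons.prems q inj_onD by fastforce
  qed
qed

lemma caseC_easy:
  assumes m3: "m \<ge> 3" and n3: "n \<ge> 3" and p3: "p \<ge> 3"
    and i: "i = 0 \<or> i = 1 \<or> i = m - 1"
    and S1: "S1 \<subseteq> RG n p" and S2: "S2 \<subseteq> RG n p" and sat: "saturated S2"
    and in1: "(q, r) \<in> S1" and out2: "(q, r) \<notin> S2"
  shows "\<exists>w. finalD n p (runD m n p (i, S1) w) \<noteq> finalD n p (runD m n p (i, S2) w)"
proof -
  have "\<exists>u. noins m i u \<and> fAw m u i = 0 \<and> c \<notin> set u"
  proof -
    consider "i = 0" | "i = 1" | "i = m - 1" using i by blast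
    then show ?thesis
    proof cases
      case 1 then show ?thesis by (intro exI[of _ "[]"]) simp
    next
      case 2 then show ?thesis using m3 by (intro exI[of _ "[b]"]) (simp add: mu_def)
    next
      case 3 then show ?thesis using m3 by (intro exI[of _ "[a]"]) simp
    qed
  qed
  then obtain u where u: "noins m i u" "fAw m u i = 0" "c \<notin> set u" by blast
  show ?thesis
    by (rule caseC0[OF m3 n3 p3 u(1) u(2) inj_fBw[OF _ u(3)] inj_fCw[OF _ u(3)] S1 S2 sat in1 out2])
       (use n3 p3 in auto)
qed

lemma rep_a_noins: "m \<ge> 3 \<Longrightarrow> i + K \<le> m - 2 \<Longrightarrow> noins m i (replicate K a) \<and> fAw m (replicate K a) i = i + K"
proof (induction K arbitrary: i)
  case 0 then show ?case by simp
next
  case (Suc K)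
  have "Suc i mod m = Suc i" using Suc.prems by simp
  then show ?case using Suc.IH[of "Suc i"] Suc.prems by simp
qed

lemma rep_d_noins: "i \<noteq> m - 1 \<Longrightarrow> noins m i (replicate t d) \<and> fAw m (replicate t d) i = i"
  by (induction t) auto

lemma rep_d_B: "fBw n (replicate t d) q = q" by (induction t) auto
lemma rep_d_C: "r < p \<Longrightarrow> fCw p (replicate t d) r = (r + t) mod p"
  using rep_HD_C[of r p t] by (simp add: expand_def)
lemma rep_a_C: "fCw p (replicate t a) r = r" by (induction t) auto
lemma rep_a_B: "n \<ge> 2 \<Longrightarrow> q < n \<Longrightarrow> fBw n (replicate k a) q = (q + k) mod n"
proof (induction k arbitrary: q)
  case 0 then show ?case by simp
next
  case (Suc k)
  have "fBw n (replicate (Suc k) a) q = fBw n (replicate k a) (Suc q mod n)" by simp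
  also have "\<dots> = (Suc q mod n + k) mod n" using Suc by simp
  also have "\<dots> = (q + Suc k) mod n" by (simp add: mod_add_left_eq)
  finally show ?case .
qed

definition Uw :: "nat \<Rightarrow> nat \<Rightarrow> bool \<Rightarrow> nat \<Rightarrow> sym list" where
  "Uw m i bv t = replicate t d @ replicate (m - i - 2) a @ (if bv then [b] else []) @ [a, a]"

lemma run_ins:
  assumes m3: "m \<ge> 3" and n2: "n \<ge> 2" and i: "2 \<le> i" "i \<le> m - 2"
  shows "runD m n p (i, S) (Uw m i bv t) =
    (0, insert (1, 0) ((\<lambda>(q, r). (fBw n (Uw m i bv t) q, fCw p (Uw m i bv t) r)) ` S))"
proof -
  define u1 where "u1 = replicate t d @ replicate (m - i - 2) a @ (if bv then [b] else [])"
  have U: "Uw m i bv t = u1 @ [a, a]" by (simp add: Uw_def u1_def)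
  have m4: "m \<ge> 4" using i by simp
  have n1: "noins m i (replicate t d) \<and> fAw m (replicate t d) i = i" using rep_d_noins i by simp
  have n2': "noins m i (replicate (m - i - 2) a) \<and> fAw m (replicate (m - i - 2) a) i = m - 2"
    using rep_a_noins[OF m3, of i "m - i - 2"] i by simp
  have n3: "noins m (m - 2) (if bv then [b] else []) \<and> fAw m (if bv then [b] else []) (m - 2) = m - 2"
    using m4 by (auto simp: mu_def)
  have ni: "noins m i u1" and fa: "fAw m u1 i = m - 2" using n1 n2' n3 by (auto simp: u1_def)
  have r1: "runD m n p (i, S) u1 = (m - 2, (\<lambda>(q, r). (fBw n u1 q, fCw p u1 r)) ` S)"
    using runD_noins[OF ni] fa by simp
  have sa1: "Suc (m - 2) mod m = m - Suc 0" using m3 by simp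
  have sa2: "Suc (m - Suc 0) mod m = 0" using m3 by simp
  have sa3: "m - Suc 0 \<noteq> 0" using m3 by simp
  have n1': "Suc 0 mod n = 1" using n2 by simp
  show ?thesis
    unfolding U runD_append r1
    using m3 n2 by (simp add: runD_Cons stepD_def Let_def sa1 sa2 sa3 n1' image_image case_prod_beta)
qed

lemma Uw_noc: "c \<notin> set (Uw m i bv t)" by (auto simp: Uw_def)

lemma Uw_B: "fBw n (Uw m i bv t) q = fBw n (Uw m i bv 0) q"
  by (simp add: Uw_def rep_d_B)

lemma Uw_C: "r < p \<Longrightarrow> fCw p (Uw m i bv t) r = (if bv then sw p ((r + t) mod p) else (r + t) mod p)"
  by (simp add: Uw_def rep_d_C rep_a_C)

lemma Uw_B0: "n \<ge> 2 \<Longrightarrow> q < n \<Longrightarrow> fBw n (Uw m i bv 0) q =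
   Suc (Suc ((if bv then sw n else id) ((q + (m - i - 2)) mod n)) mod n) mod n"
  by (simp add: Uw_def rep_a_B)

lemma aa1: "w < n \<Longrightarrow> n \<ge> 3 \<Longrightarrow> Suc (Suc w mod n) mod n = 1 \<Longrightarrow> w = n - 1"
proof -
  assume w: "w < n" and n: "n \<ge> 3" and e: "Suc (Suc w mod n) mod n = 1"
  show "w = n - 1"
  proof (rule ccontr)
    assume "w \<noteq> n - 1"
    then have "Suc w < n" using w by simp
    then have "Suc w mod n = Suc w" by simp
    then have "Suc (Suc w) mod n = 1" using e by simp
    moreover have "Suc (Suc w) \<le> n" using \<open>Suc w < n\<close> by simp
    ultimately show False using n
      by (cases "Suc (Suc w) = n") auto
  qed
qed

lemma notboth:
  assumes n3: "n \<ge> 3" and q: "q < n"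
  shows "\<not> (fBw n (Uw m i False 0) q = 1 \<and> fBw n (Uw m i True 0) q = 1)"
proof
  define z where "z = (q + (m - i - 2)) mod n"
  have z: "z < n" using n3 by (simp add: z_def)
  assume h: "fBw n (Uw m i False 0) q = 1 \<and> fBw n (Uw m i True 0) q = 1"
  then have "Suc (Suc z mod n) mod n = 1" "Suc (Suc (sw n z) mod n) mod n = 1"
    using Uw_B0[of n q m i] n3 q by (auto simp: z_def)
  then have "z = n - 1" "sw n z = n - 1" using aa1[OF z n3] aa1[OF sw_lt[OF _ z] n3] n3 by auto
  moreover have "n - Suc 0 \<noteq> n - 2" using n3 by simp
  ultimately show False using n3 by (simp add: sw_def)
qed

lemma caseC1:
  assumes m3: "m \<ge> 3" and n3: "n \<ge> 3" and p3: "p \<ge> 3"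
    and i: "2 \<le> i" "i \<le> m - 2"
    and S1: "S1 \<subseteq> RG n p" and S2: "S2 \<subseteq> RG n p" and sat: "saturated S2"
    and in1: "(q, r) \<in> S1" and out2: "(q, r) \<notin> S2"
  shows "\<exists>w. finalD n p (runD m n p (i, S1) w) \<noteq> finalD n p (runD m n p (i, S2) w)"
proof -
  have q: "q < n" "r < p" using in1 S1 by auto
  define bv where "bv = (fBw n (Uw m i False 0) q = 1)"
  have qn1: "fBw n (Uw m i bv 0) q \<noteq> 1"
    using notboth[OF n3 q(1), of m i] by (cases bv) (auto simp: bv_def)
  define f0 where "f0 = fBw n (Uw m i bv 0)"
  have injf0: "inj_on f0 {..<n}" unfolding f0_def using inj_fBw[OF _ Uw_noc] n3 by simp
  have sub: "f0 ` {..<n} \<subseteq> {..<n}" unfolding f0_def using fBw_lt[of n] n3 by auto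
  have "f0 ` {..<n} = {..<n}" using endo_inj_surj[OF _ sub injf0] by simp
  then obtain X0 where X0: "X0 < n" "f0 X0 = 1" using n3
    by (metis (no_types, lifting) imageE lessThan_iff less_trans numeral_3_eq_3 lessI le_eq_less_or_eq One_nat_def Suc_le_eq)
  have X0q: "X0 \<noteq> q" using X0 qn1 by (auto simp: f0_def)
  define y0 where "y0 = (if X0 \<in> Fq S2 q then (SOME y. y \<in> Gq S2 q) else r)"
  have y0: "y0 < p \<and> (X0 \<in> Fq S2 q \<longleftrightarrow> y0 \<in> Gq S2 q)"
  proof (cases "X0 \<in> Fq S2 q")
    case True
    then obtain r' where "(q, r') \<in> S2" using X0q by (auto simp: Fq_def)
    then have "r' \<in> Gq S2 q" by (simp add: Gq_def)
    then have "(SOME y. y \<in> Gq S2 q) \<in> Gq S2 q" by (rule someI)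
    then show ?thesis using True Gq_range[OF S2] by (auto simp: y0_def)
  next
    case False
    then show ?thesis using q Gq_not[OF out2] by (simp add: y0_def)
  qed
  define t where "t = p - y0"
  define u where "u = Uw m i bv t"
  define f where "f = fBw n u"
  define g where "g = fCw p u"
  have ff0: "f = f0" by (rule ext) (simp add: f_def f0_def u_def Uw_B[of n m i bv t])
  have gy0: "g y0 = 0"
  proof -
    have "(y0 + t) mod p = 0" using y0 by (simp add: t_def)
    then show ?thesis using y0 p3 by (simp add: g_def u_def Uw_C sw_def)
  qed
  have injf: "inj_on f {..<n}" unfolding f_def u_def using inj_fBw[OF _ Uw_noc] n3 by simp
  have injg: "inj_on g {..<p}" unfolding g_def u_def using inj_fCw[OF _ Uw_noc] p3 by simp
  let ?h = "\<lambda>(q, r). (f q, g r)"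
  have r1: "runD m n p (i, S1) u = (0, insert (1, 0) (?h ` S1))"
    unfolding u_def f_def g_def using run_ins[OF m3 _ i] n3 by simp
  have r2: "runD m n p (i, S2) u = (0, insert (1, 0) (?h ` S2))"
    unfolding u_def f_def g_def using run_ins[OF m3 _ i] n3 by simp
  define U where "U = insert (X0, y0) S2"
  have UR: "U \<subseteq> RG n p" using S2 X0 y0 by (auto simp: U_def)
  have T2: "insert (1, 0) (?h ` S2) = ?h ` U" using X0 gy0 ff0 by (simp add: U_def)
  have rg: "\<And>S. S \<subseteq> RG n p \<Longrightarrow> ?h ` S \<subseteq> RG n p"
    using fBw_lt[of n] fCw_lt[of p] n3 p3 by (auto simp: f_def g_def)
  have R1: "insert (1, 0) (?h ` S1) \<subseteq> RG n p" using rg[OF S1] n3 p3 by auto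
  have R2: "insert (1, 0) (?h ` S2) \<subseteq> RG n p" using rg[OF S2] n3 p3 by auto
  have FR: "Fq S2 q \<subseteq> {..<n}" using Fq_range[OF S2 q(1)] .
  have GR: "Gq S2 q \<subseteq> {..<p}" using Gq_range[OF S2] .
  have sepU: "\<And>x y. (x, y) \<in> U \<Longrightarrow> (x \<in> Fq S2 q \<longleftrightarrow> y \<in> Gq S2 q)"
    using sat_sep[OF sat] y0 by (auto simp: U_def)
  show ?thesis
  proof (rule prefix[OF r1 r2], rule testA[OF m3 n3 p3 R1 R2])
    show "(f q, g r) \<in> insert (1, 0) (?h ` S1)" using in1 by force
    show "(f q \<in> f ` Fq S2 q) \<noteq> (g r \<in> g ` Gq S2 q)"
      using mem_img[OF injf FR q(1)] mem_img[OF injg GR q(2)] Fq_self Gq_not[OF out2] by simp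
    fix x y assume xy: "(x, y) \<in> insert (1, 0) (?h ` S2)"
    then have "(x, y) \<in> ?h ` U" unfolding T2 .
    then show "x \<in> f ` Fq S2 q \<longleftrightarrow> y \<in> g ` Gq S2 q"
      using sep_img[OF injf injg UR FR GR sepU] by blast
  qed
qed

lemma caseC_all:
  assumes m3: "m \<ge> 3" and n3: "n \<ge> 3" and p3: "p \<ge> 3" and im: "i < m"
    and S1: "S1 \<subseteq> RG n p" and S2: "S2 \<subseteq> RG n p" and sat: "saturated S2"
    and in1: "(q, r) \<in> S1" and out2: "(q, r) \<notin> S2"
  shows "\<exists>w. finalD n p (runD m n p (i, S1) w) \<noteq> finalD n p (runD m n p (i, S2) w)"
proof (cases "i = 0 \<or> i = 1 \<or> i = m - 1")
  case True then show ?thesis using caseC_easy[OF m3 n3 p3 True S1 S2 sat in1 out2] by simp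
next
  case False
  then have "2 \<le> i" "i \<le> m - 2" using im by auto
  then show ?thesis using caseC1[OF m3 n3 p3 _ _ S1 S2 sat in1 out2] by simp
qed

lemma rep_a_A: "m \<ge> 1 \<Longrightarrow> i < m \<Longrightarrow> fAw m (replicate k a) i = (i + k) mod m"
proof (induction k arbitrary: i)
  case 0 then show ?case by simp
next
  case (Suc k)
  have "fAw m (replicate (Suc k) a) i = fAw m (replicate k a) (Suc i mod m)" by simp
  also have "\<dots> = (Suc i mod m + k) mod m" using Suc by simp
  also have "\<dots> = (i + Suc k) mod m" by (simp add: mod_add_left_eq)
  finally show ?case .
qed

lemma rep_HA_A: "m \<ge> 3 \<Longrightarrow> 1 \<le> j \<Longrightarrow> j + e \<le> m - 1 \<Longrightarrow> fAw m (expand (replicate e HA)) j = j + e"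
proof (induction e arbitrary: j)
  case 0 then show ?case by simp
next
  case (Suc e)
  have "Suc j mod m = Suc j" using Suc.prems by simp
  moreover have "mu (Suc j) = Suc j" using Suc.prems by (simp add: mu_def)
  ultimately have "fAw m (expand (replicate (Suc e) HA)) j = fAw m (expand (replicate e HA)) (Suc j)"
    by simp
  then show ?case using Suc.IH[of "Suc j"] Suc.prems by simp
qed

lemma rep_d_A: "fAw m (replicate t d) i = i" by (induction t) auto

lemma d_top: "fst st = m - 1 \<Longrightarrow> fst (runD m n p st (replicate (Suc k) d)) = m - 1 \<and> (0, 0) \<in> snd (runD m n p st (replicate (Suc k) d))"
proof -
  assume f: "fst st = m - 1"
  have e: "replicate (Suc k) d = replicate k d @ [d]" by (simp add: replicate_append_same)
  have f1: "fst (runD m n p st (replicate k d)) = m - 1"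
    using f by (simp add: fst_runD rep_d_A)
  show ?thesis unfolding e runD_append
    using f1 by (simp add: runD_Cons stepD_snd)
qed

lemma col0: "set w \<subseteq> {a, b} \<Longrightarrow> p \<ge> 3 \<Longrightarrow> (\<exists>q. (q, 0) \<in> snd st) \<Longrightarrow> \<exists>q. (q, 0) \<in> snd (runD m n p st w)"
proof (induction w arbitrary: st)
  case Nil then show ?case by simp
next
  case (Cons x w)
  obtain q where q: "(q, 0) \<in> snd st" using Cons.prems by blast
  have x: "x = a \<or> x = b" using Cons.prems by auto
  have "stepC p 0 x = 0" using x Cons.prems by (auto simp: sw_def)
  then have "(stepB n q x, 0) \<in> snd (stepD m n p st x)"
    using q by (force simp: stepD_snd)
  moreover have "set w \<subseteq> {a, b}" using Cons.prems by simp
  ultimately show ?case using Cons.IH[OF _ Cons.prems(2)] by (simp add: runD_Cons) blast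
qed

lemma caseD:
  assumes m3: "m \<ge> 3" and n3: "n \<ge> 3" and p3: "p \<ge> 3"
    and i1: "i1 < m" and i2: "i2 < m" and ne: "i1 \<noteq> i2"
    and S1: "S1 \<subseteq> RG n p" and S2: "S2 \<subseteq> RG n p"
  shows "\<exists>w. finalD n p (runD m n p (i1, S1) w) \<noteq> finalD n p (runD m n p (i2, S2) w)"
proof -
  define k where "k = m - i2"
  define j where "j = (i1 + k) mod m"
  have j0: "j \<noteq> 0"
  proof
    assume "j = 0"
    moreover have "i1 + k < 2 * m" "i1 + k > 0" using i1 i2 by (auto simp: k_def)
    ultimately have "i1 + k = m" using mod2[of "i1 + k" m] by (auto simp: j_def split: if_splits)
    then show False using ne i2 by (simp add: k_def)
  qed
  have jm: "j < m" using m3 by (simp add: j_def)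
  have k2: "(i2 + k) mod m = 0" using i2 by (simp add: k_def)
  define X1 where "X1 = snd (runD m n p (i1, S1) (replicate k a))"
  define X2 where "X2 = snd (runD m n p (i2, S2) (replicate k a))"
  have R1: "runD m n p (i1, S1) (replicate k a) = (j, X1)"
    using fst_runD[of m n p "(i1, S1)" "replicate k a"] rep_a_A[of m i1 k] m3 i1
    by (simp add: X1_def j_def prod_eq_iff)
  have R2: "runD m n p (i2, S2) (replicate k a) = (0, X2)"
    using fst_runD[of m n p "(i2, S2)" "replicate k a"] rep_a_A[of m i2 k] m3 i2 k2
    by (simp add: X2_def prod_eq_iff)
  have X2R: "X2 \<subseteq> RG n p" using runD_range[of n p "(i2, S2)"] n3 p3 S2 by (simp add: X2_def)
  have X1R: "X1 \<subseteq> RG n p" using runD_range[of n p "(i1, S1)"] n3 p3 S1 by (simp add: X1_def)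
  define j' where "j' = sw m j"
  have j'1: "1 \<le> j'" "j' \<le> m - 1" using j0 jm m3 by (auto simp: j'_def sw_def)
  define e where "e = m - 1 - j'"
  define h where "h = [HC] @ replicate e HA @ replicate (p - 1) HD @ [HA]"
  have hC: "\<And>r. r < p \<Longrightarrow> fCw p (expand h) r = (mu r + (p - 1)) mod p"
    using p3 by (simp add: h_def rep_HA_C rep_HD_C mu_lt sw_sw)
  have hC0: "\<And>r. r < p \<Longrightarrow> fCw p (expand h) r \<noteq> 0"
  proof -
    fix r assume r: "r < p"
    define z where "z = mu r"
    have z: "z < p" "z \<noteq> 1" using r by (auto simp: z_def mu_def)
    have "(z + (p - 1)) mod p \<noteq> 0"
    proof (cases "z = 0")
      case True then show ?thesis using p3 by simp
    next
      case False
      then have "z + (p - 1) < 2 * p" "z + (p - 1) \<ge> p" using z p3 by auto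
      then have "(z + (p - 1)) mod p = z + (p - 1) - p" using mod2 by simp
      then show ?thesis using z False by simp
    qed
    then show "fCw p (expand h) r \<noteq> 0" using hC[OF r] by (simp add: z_def)
  qed
  let ?h = "\<lambda>(q, r). (fBw n (expand h) q, fCw p (expand h) r)"
  have F2: "runD m n p (0, X2) (expand h) = (0, ?h ` X2)" using home_run[OF m3] .
  define st1 where "st1 = runD m n p (j, X1) [c]"
  have fst1: "fst st1 = j'" by (simp add: st1_def j'_def fst_runD)
  define st2 where "st2 = runD m n p st1 (expand (replicate e HA))"
  have fst2: "fst st2 = m - 1"
    using rep_HA_A[OF m3 j'1(1), of e] j'1 fst1 by (simp add: st2_def fst_runD e_def)
  define st3 where "st3 = runD m n p st2 (replicate (p - 1) d)"
  have p1: "p - 1 = Suc (p - 2)" using p3 by simp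
  have st3: "fst st3 = m - 1 \<and> (0, 0) \<in> snd st3"
    using d_top[OF fst2, where k = "p - 2" and n = n and p = p] unfolding st3_def p1 .
  define st4 where "st4 = runD m n p st3 [a, b, b]"
  have fst4: "fst st4 = 0" using st3 m3 by (simp add: st4_def fst_runD mu_def)
  have col4: "\<exists>q. (q, 0) \<in> snd st4" using col0[of "[a, b, b]" p "st3"] st3 p3 by (auto simp: st4_def)
  have exp_h: "expand h = [c] @ expand (replicate e HA) @ replicate (p - 1) d @ [a, b, b]"
    by (simp add: h_def expand_def)
  have F1: "runD m n p (j, X1) (expand h) = st4"
    unfolding exp_h runD_append st4_def st3_def st2_def st1_def by simp
  define Z where "Z = snd st4"
  have F1': "runD m n p (j, X1) (expand h) = (0, Z)" using F1 fst4 by (simp add: Z_def prod_eq_iff)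
  have ZR: "Z \<subseteq> RG n p" using runD_range[of n p "(j, X1)" m "expand h"] n3 p3 X1R F1' by simp
  have T2R: "?h ` X2 \<subseteq> RG n p" using X2R fBw_lt[of n] fCw_lt[of p] n3 p3 by auto
  obtain q0 where q0: "(q0, 0) \<in> Z" using col4 by (auto simp: Z_def)
  have U1: "runD m n p (i1, S1) (replicate k a @ expand h) = (0, Z)"
    by (simp add: runD_append R1 F1')
  have U2: "runD m n p (i2, S2) (replicate k a @ expand h) = (0, ?h ` X2)"
    by (simp add: runD_append R2 F2)
  show ?thesis
  proof (rule prefix[OF U1 U2], rule testA[OF m3 n3 p3 ZR T2R q0, of "{}" "{0}"])
    show "(q0 \<in> {}) \<noteq> (0 \<in> {0::nat})" by simp
    fix x y assume "(x, y) \<in> ?h ` X2"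
    then have "y \<noteq> 0" using hC0 X2R by auto
    then show "x \<in> {} \<longleftrightarrow> y \<in> {0}" by simp
  qed
qed

theorem theorem3:
  fixes m n p i1 i2 :: nat and S1 S2 :: "(nat \<times> nat) set"
  assumes "m \<ge> 3" and "n \<ge> 3" and "p \<ge> 3"
    and "stateD m n p (i1, S1)" and "stateD m n p (i2, S2)"
    and "(i1, S1) \<noteq> (i2, S2)"
    and "saturated S1" and "saturated S2"
    and "i1 = m - 1 \<Longrightarrow> (0, 0) \<in> S1"
    and "i2 = m - 1 \<Longrightarrow> (0, 0) \<in> S2"
  shows "\<exists>w. finalD n p (runD m n p (i1, S1) w) \<noteq> finalD n p (runD m n p (i2, S2) w)"
proof -
  have i1: "i1 < m" and S1: "S1 \<subseteq> RG n p" using assms(4) by (auto simp: stateD_def)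
  have i2: "i2 < m" and S2: "S2 \<subseteq> RG n p" using assms(5) by (auto simp: stateD_def)
  show ?thesis
  proof (cases "i1 = i2")
    case False
    show ?thesis using caseD[OF assms(1-3) i1 i2 False S1 S2] .
  next
    case True
    then have "S1 \<noteq> S2" using assms(6) by simp
    then obtain x where "(x \<in> S1 \<and> x \<notin> S2) \<or> (x \<in> S2 \<and> x \<notin> S1)" by blast
    moreover obtain q r where "x = (q, r)" by (cases x)
    ultimately have "((q, r) \<in> S1 \<and> (q, r) \<notin> S2) \<or> ((q, r) \<in> S2 \<and> (q, r) \<notin> S1)" by simp
    then show ?thesis
    proof
      assume h: "(q, r) \<in> S1 \<and> (q, r) \<notin> S2"
      show ?thesis using caseC_all[OF assms(1-3) i1 S1 S2 assms(8) h[THEN conjunct1] h[THEN conjunct2]] True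
        by simp
    next
      assume h: "(q, r) \<in> S2 \<and> (q, r) \<notin> S1"
      have "\<exists>w. finalD n p (runD m n p (i1, S2) w) \<noteq> finalD n p (runD m n p (i1, S1) w)"
        using caseC_all[OF assms(1-3) i1 S2 S1 assms(7) h[THEN conjunct1] h[THEN conjunct2]] .
      then show ?thesis using True by metis
    qed
  qed
qed

end
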